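(* Let $\mathcal{C}=(\mathbf{C},\otimes,a,\mathcal{T})$ be a braided semigroupal category in which $\mathbf{C}$ is an additive category with pullbacks. Then the category $\mathbf{Lie}(\mathcal{C})$ of Lie objects has pullbacks. Specifically, given Lie morphisms $f\colon(A,\mu_A)\to(C,\mu_C)$ and $g\colon(B,\mu_B)\to(C,\mu_C)$, let $(A\times_CB,\pi_A,\pi_B)$ be their pullback in $\mathbf{C}$ and let $\mu_{A\times_CB}\colon(A\times_CB)\otimes(A\times_CB)\to A\times_CB$ be the unique morphism with $\pi_X\circ\mu_{A\times_CB}=\mu_X\circ(\pi_X\otimes\pi_X)$ for $X\in\{A,B\}$ (which exists). Then $((A\times_CB,\mu_{A\times_CB}),\pi_A,\pi_B)$ is a pullback of $f$ and $g$ in $\mathbf{Lie}(\mathcal{C})$.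
   Context: $a$ denotes the associativity natural isomorphism $a_{X,Y,Z}\colon(X\otimes Y)\otimes Z\to X\otimes(Y\otimes Z)$ and $\mathcal{T}_{X,Y}\colon X\otimes Y\to Y\otimes X$ the braiding natural isomorphism. A Lie object in $\mathcal{C}$ is a pair $(A,\mu)$ with $\mu\colon A\otimes A\to A$ such that $0=\mu\circ\mathcal{T}_{A,A}+\mu$ and $0=\mu\circ(\mathrm{Id}_A\otimes\mu)\circ a_{A,A,A}+\mu\circ(\mu\otimes\mathrm{Id}_A)\circ a^{-1}_{A,A,A}\circ(\mathrm{Id}_A\otimes\mathcal{T}_{A,A})\circ a_{A,A,A}-\mu\circ(\mu\otimes\mathrm{Id}_A)$. A Lie morphism $f\colon(A,\mu)\to(B,\eta)$ is a morphism $f\colon A\to B$ with $f\circ\mu=\eta\circ(f\otimes f)$. $\mathbf{Lie}(\mathcal{C})$ is the category of Lie objects and Lie morphisms. *)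

theory Defs
  imports Main
begin

record ('o,'m) cat =
  cObj  :: "'o set"
  cArr  :: "'m set"
  cDom  :: "'m \<Rightarrow> 'o"
  cCod  :: "'m \<Rightarrow> 'o"
  cId   :: "'o \<Rightarrow> 'm"
  cComp :: "'m \<Rightarrow> 'm \<Rightarrow> 'm"   \<comment> \<open>cComp C g f = g \<circ> f\<close>

definition hom :: "('o,'m,'x) cat_scheme \<Rightarrow> 'o \<Rightarrow> 'o \<Rightarrow> 'm set" where
  "hom C X Y = {f \<in> cArr C. cDom C f = X \<and> cCod C f = Y}"

definition category :: "('o,'m,'x) cat_scheme \<Rightarrow> bool" where
  "category C \<longleftrightarrow>
     (\<forall>f \<in> cArr C. cDom C f \<in> cObj C \<and> cCod C f \<in> cObj C) \<and>
     (\<forall>X \<in> cObj C. cId C X \<in> hom C X X) \<and>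
     (\<forall>f \<in> cArr C. \<forall>g \<in> cArr C. cCod C f = cDom C g \<longrightarrow>
         cComp C g f \<in> hom C (cDom C f) (cCod C g)) \<and>
     (\<forall>f \<in> cArr C. cComp C (cId C (cCod C f)) f = f \<and> cComp C f (cId C (cDom C f)) = f) \<and>
     (\<forall>f \<in> cArr C. \<forall>g \<in> cArr C. \<forall>h \<in> cArr C. cCod C f = cDom C g \<longrightarrow> cCod C g = cDom C h \<longrightarrow>
         cComp C h (cComp C g f) = cComp C (cComp C h g) f)"

definition is_iso :: "('o,'m,'x) cat_scheme \<Rightarrow> 'm \<Rightarrow> bool" where
  "is_iso C f \<longleftrightarrow> f \<in> cArr C \<and>
     (\<exists>g \<in> hom C (cCod C f) (cDom C f).
        cComp C g f = cId C (cDom C f) \<and> cComp C f g = cId C (cCod C f))"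

definition inv_arr :: "('o,'m,'x) cat_scheme \<Rightarrow> 'm \<Rightarrow> 'm" where
  "inv_arr C f = (SOME g. g \<in> hom C (cCod C f) (cDom C f) \<and>
        cComp C g f = cId C (cDom C f) \<and> cComp C f g = cId C (cCod C f))"

definition is_pullback ::
  "('o,'m,'x) cat_scheme \<Rightarrow> 'm \<Rightarrow> 'm \<Rightarrow> 'o \<Rightarrow> 'm \<Rightarrow> 'm \<Rightarrow> bool" where
  "is_pullback C f g P p q \<longleftrightarrow>
     f \<in> cArr C \<and> g \<in> cArr C \<and> cCod C f = cCod C g \<and> P \<in> cObj C \<and>
     p \<in> hom C P (cDom C f) \<and> q \<in> hom C P (cDom C g) \<and>
     cComp C f p = cComp C g q \<and>
     (\<forall>Q \<in> cObj C. \<forall>h k. h \<in> hom C Q (cDom C f) \<longrightarrow> k \<in> hom C Q (cDom C g) \<longrightarrow>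
          cComp C f h = cComp C g k \<longrightarrow>
          (\<exists>!u. u \<in> hom C Q P \<and> cComp C p u = h \<and> cComp C q u = k))"

definition has_pullbacks :: "('o,'m,'x) cat_scheme \<Rightarrow> bool" where
  "has_pullbacks C \<longleftrightarrow>
     (\<forall>f \<in> cArr C. \<forall>g \<in> cArr C. cCod C f = cCod C g \<longrightarrow> (\<exists>P p q. is_pullback C f g P p q))"

record ('o,'m) addcat = "('o,'m) cat" +
  cPlus :: "'m \<Rightarrow> 'm \<Rightarrow> 'm"
  cZero :: "'o \<Rightarrow> 'o \<Rightarrow> 'm"
  cNeg  :: "'m \<Rightarrow> 'm"

definition preadditive :: "('o,'m,'x) addcat_scheme \<Rightarrow> bool" where
  "preadditive C \<longleftrightarrow> category C \<and>
     (\<forall>X \<in> cObj C. \<forall>Y \<in> cObj C.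
        cZero C X Y \<in> hom C X Y \<and>
        (\<forall>f \<in> hom C X Y. \<forall>g \<in> hom C X Y. cPlus C f g \<in> hom C X Y) \<and>
        (\<forall>f \<in> hom C X Y. cNeg C f \<in> hom C X Y) \<and>
        (\<forall>f \<in> hom C X Y. \<forall>g \<in> hom C X Y. \<forall>h \<in> hom C X Y.
            cPlus C (cPlus C f g) h = cPlus C f (cPlus C g h)) \<and>
        (\<forall>f \<in> hom C X Y. \<forall>g \<in> hom C X Y. cPlus C f g = cPlus C g f) \<and>
        (\<forall>f \<in> hom C X Y. cPlus C f (cZero C X Y) = f) \<and>
        (\<forall>f \<in> hom C X Y. cPlus C f (cNeg C f) = cZero C X Y)) \<and>
     (\<forall>X \<in> cObj C. \<forall>Y \<in> cObj C. \<forall>Z \<in> cObj C.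
        (\<forall>f \<in> hom C X Y. \<forall>f' \<in> hom C X Y. \<forall>g \<in> hom C Y Z.
            cComp C g (cPlus C f f') = cPlus C (cComp C g f) (cComp C g f')) \<and>
        (\<forall>f \<in> hom C X Y. \<forall>g \<in> hom C Y Z. \<forall>g' \<in> hom C Y Z.
            cComp C (cPlus C g g') f = cPlus C (cComp C g f) (cComp C g' f)))"

definition additive :: "('o,'m,'x) addcat_scheme \<Rightarrow> bool" where
  "additive C \<longleftrightarrow> preadditive C \<and>
     (\<exists>Z \<in> cObj C. \<forall>X \<in> cObj C. (\<exists>!f. f \<in> hom C Z X) \<and> (\<exists>!f. f \<in> hom C X Z)) \<and>
     (\<forall>X \<in> cObj C. \<forall>Y \<in> cObj C. \<exists>P \<in> cObj C. \<exists>i1 i2 p1 p2.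
        i1 \<in> hom C X P \<and> i2 \<in> hom C Y P \<and> p1 \<in> hom C P X \<and> p2 \<in> hom C P Y \<and>
        cComp C p1 i1 = cId C X \<and> cComp C p2 i2 = cId C Y \<and>
        cComp C p1 i2 = cZero C Y X \<and> cComp C p2 i1 = cZero C X Y \<and>
        cPlus C (cComp C i1 p1) (cComp C i2 p2) = cId C P)"

record ('o,'m) bscat = "('o,'m) addcat" +
  cTens  :: "'o \<Rightarrow> 'o \<Rightarrow> 'o"
  cTensM :: "'m \<Rightarrow> 'm \<Rightarrow> 'm"
  cAssoc :: "'o \<Rightarrow> 'o \<Rightarrow> 'o \<Rightarrow> 'm"
  cBraid :: "'o \<Rightarrow> 'o \<Rightarrow> 'm"

definition braided_semigroupal :: "('o,'m,'x) bscat_scheme \<Rightarrow> bool" where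
  "braided_semigroupal C \<longleftrightarrow> category C \<and>
     \<comment> \<open>tensor product is a bifunctor\<close>
     (\<forall>X \<in> cObj C. \<forall>Y \<in> cObj C. cTens C X Y \<in> cObj C) \<and>
     (\<forall>f \<in> cArr C. \<forall>g \<in> cArr C. cTensM C f g \<in>
         hom C (cTens C (cDom C f) (cDom C g)) (cTens C (cCod C f) (cCod C g))) \<and>
     (\<forall>X \<in> cObj C. \<forall>Y \<in> cObj C. cTensM C (cId C X) (cId C Y) = cId C (cTens C X Y)) \<and>
     (\<forall>f \<in> cArr C. \<forall>f' \<in> cArr C. \<forall>g \<in> cArr C. \<forall>g' \<in> cArr C.
        cCod C f = cDom C f' \<longrightarrow> cCod C g = cDom C g' \<longrightarrow>
        cTensM C (cComp C f' f) (cComp C g' g) = cComp C (cTensM C f' g') (cTensM C f g)) \<and>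
     \<comment> \<open>associator: natural isomorphism\<close>
     (\<forall>X \<in> cObj C. \<forall>Y \<in> cObj C. \<forall>Z \<in> cObj C.
        cAssoc C X Y Z \<in> hom C (cTens C (cTens C X Y) Z) (cTens C X (cTens C Y Z)) \<and>
        is_iso C (cAssoc C X Y Z)) \<and>
     (\<forall>f \<in> cArr C. \<forall>g \<in> cArr C. \<forall>h \<in> cArr C.
        cComp C (cAssoc C (cCod C f) (cCod C g) (cCod C h)) (cTensM C (cTensM C f g) h) =
        cComp C (cTensM C f (cTensM C g h)) (cAssoc C (cDom C f) (cDom C g) (cDom C h))) \<and>
     \<comment> \<open>pentagon\<close>
     (\<forall>W \<in> cObj C. \<forall>X \<in> cObj C. \<forall>Y \<in> cObj C. \<forall>Z \<in> cObj C.
        cComp C (cAssoc C W X (cTens C Y Z)) (cAssoc C (cTens C W X) Y Z) =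
        cComp C (cTensM C (cId C W) (cAssoc C X Y Z))
          (cComp C (cAssoc C W (cTens C X Y) Z) (cTensM C (cAssoc C W X Y) (cId C Z)))) \<and>
     \<comment> \<open>braiding: natural isomorphism\<close>
     (\<forall>X \<in> cObj C. \<forall>Y \<in> cObj C.
        cBraid C X Y \<in> hom C (cTens C X Y) (cTens C Y X) \<and> is_iso C (cBraid C X Y)) \<and>
     (\<forall>f \<in> cArr C. \<forall>g \<in> cArr C.
        cComp C (cBraid C (cCod C f) (cCod C g)) (cTensM C f g) =
        cComp C (cTensM C g f) (cBraid C (cDom C f) (cDom C g))) \<and>
     \<comment> \<open>hexagons\<close>
     (\<forall>X \<in> cObj C. \<forall>Y \<in> cObj C. \<forall>Z \<in> cObj C.
        cComp C (cAssoc C Y Z X) (cComp C (cBraid C X (cTens C Y Z)) (cAssoc C X Y Z)) =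
        cComp C (cTensM C (cId C Y) (cBraid C X Z))
          (cComp C (cAssoc C Y X Z) (cTensM C (cBraid C X Y) (cId C Z)))) \<and>
     (\<forall>X \<in> cObj C. \<forall>Y \<in> cObj C. \<forall>Z \<in> cObj C.
        cComp C (inv_arr C (cAssoc C Z X Y))
          (cComp C (cBraid C (cTens C X Y) Z) (inv_arr C (cAssoc C X Y Z))) =
        cComp C (cTensM C (cBraid C X Z) (cId C Y))
          (cComp C (inv_arr C (cAssoc C X Z Y)) (cTensM C (cId C X) (cBraid C Y Z))))"

definition additive_braided_semigroupal :: "('o,'m,'x) bscat_scheme \<Rightarrow> bool" where
  "additive_braided_semigroupal C \<longleftrightarrow> additive C \<and> braided_semigroupal C"

definition lie_obj :: "('o,'m,'x) bscat_scheme \<Rightarrow> 'o \<Rightarrow> 'm \<Rightarrow> bool" where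
  "lie_obj C A \<mu> \<longleftrightarrow> A \<in> cObj C \<and> \<mu> \<in> hom C (cTens C A A) A \<and>
     cZero C (cTens C A A) A = cPlus C (cComp C \<mu> (cBraid C A A)) \<mu> \<and>
     cZero C (cTens C (cTens C A A) A) A =
       cPlus C
         (cPlus C
           (cComp C \<mu> (cComp C (cTensM C (cId C A) \<mu>) (cAssoc C A A A)))
           (cComp C \<mu> (cComp C (cTensM C \<mu> (cId C A))
              (cComp C (inv_arr C (cAssoc C A A A))
                 (cComp C (cTensM C (cId C A) (cBraid C A A)) (cAssoc C A A A))))))
         (cNeg C (cComp C \<mu> (cTensM C \<mu> (cId C A))))"

definition lie_mor :: "('o,'m,'x) bscat_scheme \<Rightarrow> 'o \<times> 'm \<Rightarrow> 'o \<times> 'm \<Rightarrow> 'm \<Rightarrow> bool" where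
  "lie_mor C X Y f \<longleftrightarrow> f \<in> hom C (fst X) (fst Y) \<and>
     cComp C f (snd X) = cComp C (snd Y) (cTensM C f f)"

text \<open>The category Lie(C): objects are Lie objects (A, mu); a morphism is a triple
  (source, f, target) with f a Lie morphism.\<close>
definition Lie_cat :: "('o,'m,'x) bscat_scheme \<Rightarrow> ('o \<times> 'm, ('o \<times> 'm) \<times> 'm \<times> ('o \<times> 'm)) cat" where
  "Lie_cat C = \<lparr> cObj = {X. lie_obj C (fst X) (snd X)},
     cArr = {(X, f, Y). lie_obj C (fst X) (snd X) \<and> lie_obj C (fst Y) (snd Y) \<and> lie_mor C X Y f},
     cDom = (\<lambda>(X, f, Y). X),
     cCod = (\<lambda>(X, f, Y). Y),
     cId = (\<lambda>X. (X, cId C (fst X), X)),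
     cComp = (\<lambda>(Y, g, Z) (X, f, Y'). (X, cComp C g f, Z)) \<rparr>"

end

theory Submission
  imports Defs
begin

lemma inv_arr_props:
  assumes "is_iso C f"
  shows "inv_arr C f \<in> hom C (cCod C f) (cDom C f)"
    "cComp C (inv_arr C f) f = cId C (cDom C f)" "cComp C f (inv_arr C f) = cId C (cCod C f)"
proof -
  have "\<exists>g. g \<in> hom C (cCod C f) (cDom C f) \<and>
        cComp C g f = cId C (cDom C f) \<and> cComp C f g = cId C (cCod C f)"
    using assms unfolding is_iso_def by blast
  from someI_ex[OF this] show "inv_arr C f \<in> hom C (cCod C f) (cDom C f)"
    "cComp C (inv_arr C f) f = cId C (cDom C f)" "cComp C f (inv_arr C f) = cId C (cCod C f)"
    unfolding inv_arr_def by auto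
qed

locale abs =
  fixes C :: "('o,'m,'x) bscat_scheme"
  assumes ab: "additive_braided_semigroupal C"
begin

abbreviation comp (infixr "\<cdot>" 75) where "g \<cdot> f \<equiv> cComp C g f"
abbreviation tm (infixr "\<otimes>" 80) where "f \<otimes> g \<equiv> cTensM C f g"
abbreviation to (infixr "\<odot>" 70) where "X \<odot> Y \<equiv> cTens C X Y"
abbreviation "arr f \<equiv> f \<in> cArr C"
abbreviation "obj X \<equiv> X \<in> cObj C"
abbreviation "dm \<equiv> cDom C"
abbreviation "cd \<equiv> cCod C"
abbreviation "idt \<equiv> cId C"
abbreviation "\<alpha> \<equiv> cAssoc C"
abbreviation "\<alpha>' X Y Z \<equiv> inv_arr C (cAssoc C X Y Z)"
abbreviation "\<beta> \<equiv> cBraid C"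
abbreviation pl (infixl "\<oplus>" 65) where "f \<oplus> g \<equiv> cPlus C f g"
abbreviation "z \<equiv> cZero C"
abbreviation "ng \<equiv> cNeg C"

lemma cat: "category C" using ab unfolding additive_braided_semigroupal_def braided_semigroupal_def by blast
lemma bs: "braided_semigroupal C" using ab unfolding additive_braided_semigroupal_def by blast
lemma pa: "preadditive C" using ab unfolding additive_braided_semigroupal_def additive_def by blast

lemma hom_iff: "f \<in> hom C X Y \<longleftrightarrow> arr f \<and> dm f = X \<and> cd f = Y" by (simp add: hom_def)

lemma dom_obj[simp]: "arr f \<Longrightarrow> obj (dm f)" and cod_obj[simp]: "arr f \<Longrightarrow> obj (cd f)"
  using cat unfolding category_def by auto

lemma id_arr[simp]: "obj X \<Longrightarrow> arr (idt X)" and id_dom[simp]: "obj X \<Longrightarrow> dm (idt X) = X"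
  and id_cod[simp]: "obj X \<Longrightarrow> cd (idt X) = X"
  using cat unfolding category_def hom_def by auto

lemma comp_arr[simp]: "arr f \<Longrightarrow> arr g \<Longrightarrow> cd f = dm g \<Longrightarrow> arr (g \<cdot> f)"
  and comp_dom[simp]: "arr f \<Longrightarrow> arr g \<Longrightarrow> cd f = dm g \<Longrightarrow> dm (g \<cdot> f) = dm f"
  and comp_cod[simp]: "arr f \<Longrightarrow> arr g \<Longrightarrow> cd f = dm g \<Longrightarrow> cd (g \<cdot> f) = cd g"
  using cat unfolding category_def hom_def by auto

lemma id_left[simp]: "arr f \<Longrightarrow> idt (cd f) \<cdot> f = f"
  and id_right[simp]: "arr f \<Longrightarrow> f \<cdot> idt (dm f) = f"
  using cat unfolding category_def by auto

lemma assoc: "arr f \<Longrightarrow> arr g \<Longrightarrow> arr h \<Longrightarrow> cd f = dm g \<Longrightarrow> cd g = dm h \<Longrightarrow>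
   h \<cdot> (g \<cdot> f) = (h \<cdot> g) \<cdot> f"
  using cat unfolding category_def by auto

lemma tobj[simp]: "obj X \<Longrightarrow> obj Y \<Longrightarrow> obj (X \<odot> Y)"
  using bs unfolding braided_semigroupal_def by auto

lemma tm_arr[simp]: "arr f \<Longrightarrow> arr g \<Longrightarrow> arr (f \<otimes> g)"
  and tm_dom[simp]: "arr f \<Longrightarrow> arr g \<Longrightarrow> dm (f \<otimes> g) = dm f \<odot> dm g"
  and tm_cod[simp]: "arr f \<Longrightarrow> arr g \<Longrightarrow> cd (f \<otimes> g) = cd f \<odot> cd g"
  using bs unfolding braided_semigroupal_def hom_def by auto

lemma tm_id[simp]: "obj X \<Longrightarrow> obj Y \<Longrightarrow> idt X \<otimes> idt Y = idt (X \<odot> Y)"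
  using bs unfolding braided_semigroupal_def by auto

lemma interchange: "arr f \<Longrightarrow> arr f' \<Longrightarrow> arr g \<Longrightarrow> arr g' \<Longrightarrow> cd f = dm f' \<Longrightarrow> cd g = dm g' \<Longrightarrow>
   (f' \<cdot> f) \<otimes> (g' \<cdot> g) = (f' \<otimes> g') \<cdot> (f \<otimes> g)"
  using bs unfolding braided_semigroupal_def by auto

lemma a_arr[simp]: "obj X \<Longrightarrow> obj Y \<Longrightarrow> obj Z \<Longrightarrow> arr (\<alpha> X Y Z)"
  and a_dom[simp]: "obj X \<Longrightarrow> obj Y \<Longrightarrow> obj Z \<Longrightarrow> dm (\<alpha> X Y Z) = (X \<odot> Y) \<odot> Z"
  and a_cod[simp]: "obj X \<Longrightarrow> obj Y \<Longrightarrow> obj Z \<Longrightarrow> cd (\<alpha> X Y Z) = X \<odot> (Y \<odot> Z)"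
  and a_iso: "obj X \<Longrightarrow> obj Y \<Longrightarrow> obj Z \<Longrightarrow> is_iso C (\<alpha> X Y Z)"
  using bs unfolding braided_semigroupal_def hom_def by auto

lemma a_nat: "arr f \<Longrightarrow> arr g \<Longrightarrow> arr h \<Longrightarrow>
   \<alpha> (cd f) (cd g) (cd h) \<cdot> ((f \<otimes> g) \<otimes> h) = (f \<otimes> (g \<otimes> h)) \<cdot> \<alpha> (dm f) (dm g) (dm h)"
  using bs unfolding braided_semigroupal_def by auto

lemma ai_arr[simp]: "obj X \<Longrightarrow> obj Y \<Longrightarrow> obj Z \<Longrightarrow> arr (\<alpha>' X Y Z)"
  and ai_dom[simp]: "obj X \<Longrightarrow> obj Y \<Longrightarrow> obj Z \<Longrightarrow> dm (\<alpha>' X Y Z) = X \<odot> (Y \<odot> Z)"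
  and ai_cod[simp]: "obj X \<Longrightarrow> obj Y \<Longrightarrow> obj Z \<Longrightarrow> cd (\<alpha>' X Y Z) = (X \<odot> Y) \<odot> Z"
  and ai_l: "obj X \<Longrightarrow> obj Y \<Longrightarrow> obj Z \<Longrightarrow> \<alpha>' X Y Z \<cdot> \<alpha> X Y Z = idt ((X \<odot> Y) \<odot> Z)"
  and ai_r: "obj X \<Longrightarrow> obj Y \<Longrightarrow> obj Z \<Longrightarrow> \<alpha> X Y Z \<cdot> \<alpha>' X Y Z = idt (X \<odot> (Y \<odot> Z))"
  using inv_arr_props[OF a_iso[of X Y Z]] by (auto simp: hom_def)

lemma ai_nat: assumes "arr f" "arr g" "arr h"
  shows "((f \<otimes> g) \<otimes> h) \<cdot> \<alpha>' (dm f) (dm g) (dm h) = \<alpha>' (cd f) (cd g) (cd h) \<cdot> (f \<otimes> (g \<otimes> h))"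
proof -
  let ?ac = "\<alpha> (cd f) (cd g) (cd h)" and ?ad = "\<alpha> (dm f) (dm g) (dm h)"
  let ?ic = "\<alpha>' (cd f) (cd g) (cd h)" and ?id = "\<alpha>' (dm f) (dm g) (dm h)"
  let ?L = "(f \<otimes> g) \<otimes> h" and ?R = "f \<otimes> (g \<otimes> h)"
  have "?L \<cdot> ?id = (?ic \<cdot> ?ac) \<cdot> (?L \<cdot> ?id)" using assms id_left[of "?L \<cdot> ?id"] by (simp add: ai_l)
  also have "\<dots> = ?ic \<cdot> ((?ac \<cdot> ?L) \<cdot> ?id)" using assms by (simp add: assoc)
  also have "\<dots> = ?ic \<cdot> ((?R \<cdot> ?ad) \<cdot> ?id)" using assms by (simp add: a_nat)
  also have "\<dots> = ?ic \<cdot> (?R \<cdot> (?ad \<cdot> ?id))" using assms by (simp add: assoc)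
  also have "\<dots> = ?ic \<cdot> ?R" using assms id_right[of ?R] by (simp add: ai_r)
  finally show ?thesis .
qed

lemma b_arr[simp]: "obj X \<Longrightarrow> obj Y \<Longrightarrow> arr (\<beta> X Y)"
  and b_dom[simp]: "obj X \<Longrightarrow> obj Y \<Longrightarrow> dm (\<beta> X Y) = X \<odot> Y"
  and b_cod[simp]: "obj X \<Longrightarrow> obj Y \<Longrightarrow> cd (\<beta> X Y) = Y \<odot> X"
  using bs unfolding braided_semigroupal_def hom_def by auto

lemma b_nat: "arr f \<Longrightarrow> arr g \<Longrightarrow>
   \<beta> (cd f) (cd g) \<cdot> (f \<otimes> g) = (g \<otimes> f) \<cdot> \<beta> (dm f) (dm g)"
  using bs unfolding braided_semigroupal_def by auto

end

context abs begin

lemma pa1: "\<forall>X \<in> cObj C. \<forall>Y \<in> cObj C.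
        cZero C X Y \<in> hom C X Y \<and>
        (\<forall>f \<in> hom C X Y. \<forall>g \<in> hom C X Y. cPlus C f g \<in> hom C X Y) \<and>
        (\<forall>f \<in> hom C X Y. cNeg C f \<in> hom C X Y) \<and>
        (\<forall>f \<in> hom C X Y. \<forall>g \<in> hom C X Y. \<forall>h \<in> hom C X Y.
            cPlus C (cPlus C f g) h = cPlus C f (cPlus C g h)) \<and>
        (\<forall>f \<in> hom C X Y. \<forall>g \<in> hom C X Y. cPlus C f g = cPlus C g f) \<and>
        (\<forall>f \<in> hom C X Y. cPlus C f (cZero C X Y) = f) \<and>
        (\<forall>f \<in> hom C X Y. cPlus C f (cNeg C f) = cZero C X Y)"
  using pa unfolding preadditive_def by (elim conjE)

lemma pa_hom: "obj X \<Longrightarrow> obj Y \<Longrightarrow> z X Y \<in> hom C X Y"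
  "obj X \<Longrightarrow> obj Y \<Longrightarrow> f \<in> hom C X Y \<Longrightarrow> g \<in> hom C X Y \<Longrightarrow> f \<oplus> g \<in> hom C X Y"
  "obj X \<Longrightarrow> obj Y \<Longrightarrow> f \<in> hom C X Y \<Longrightarrow> ng f \<in> hom C X Y"
  using pa1 by blast+

lemma pa_ax: "obj X \<Longrightarrow> obj Y \<Longrightarrow> f \<in> hom C X Y \<Longrightarrow> g \<in> hom C X Y \<Longrightarrow> h \<in> hom C X Y \<Longrightarrow> (f \<oplus> g) \<oplus> h = f \<oplus> (g \<oplus> h)"
  "obj X \<Longrightarrow> obj Y \<Longrightarrow> f \<in> hom C X Y \<Longrightarrow> g \<in> hom C X Y \<Longrightarrow> f \<oplus> g = g \<oplus> f"
  "obj X \<Longrightarrow> obj Y \<Longrightarrow> f \<in> hom C X Y \<Longrightarrow> f \<oplus> z X Y = f"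
  "obj X \<Longrightarrow> obj Y \<Longrightarrow> f \<in> hom C X Y \<Longrightarrow> f \<oplus> ng f = z X Y"
  using pa1 by blast+

lemma distr_l: assumes "p \<in> hom C Y W" "x \<in> hom C X Y" "y \<in> hom C X Y" shows "p \<cdot> (x \<oplus> y) = p \<cdot> x \<oplus> p \<cdot> y"
proof -
  have o: "obj X" "obj Y" "obj W" using assms by (auto simp: hom_iff dest: dom_obj cod_obj)
  have "\<forall>X \<in> cObj C. \<forall>Y \<in> cObj C. \<forall>Z \<in> cObj C.
        (\<forall>f \<in> hom C X Y. \<forall>f' \<in> hom C X Y. \<forall>g \<in> hom C Y Z.
            cComp C g (cPlus C f f') = cPlus C (cComp C g f) (cComp C g f'))"
    using pa unfolding preadditive_def by blast
  thus ?thesis using o assms by blast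
qed

lemma distr_r: assumes "q \<in> hom C X Y" "x \<in> hom C Y W" "y \<in> hom C Y W" shows "(x \<oplus> y) \<cdot> q = x \<cdot> q \<oplus> y \<cdot> q"
proof -
  have o: "obj X" "obj Y" "obj W" using assms by (auto simp: hom_iff dest: dom_obj cod_obj)
  have "\<forall>X \<in> cObj C. \<forall>Y \<in> cObj C. \<forall>Z \<in> cObj C.
        (\<forall>f \<in> hom C X Y. \<forall>f' \<in> hom C X Y. \<forall>g \<in> hom C Y Z.
            cComp C g (cPlus C f f') = cPlus C (cComp C g f) (cComp C g f')) \<and>
        (\<forall>f \<in> hom C X Y. \<forall>g \<in> hom C Y Z. \<forall>g' \<in> hom C Y Z.
            cComp C (cPlus C g g') f = cPlus C (cComp C g f) (cComp C g' f))"
    using pa unfolding preadditive_def by (elim conjE)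
  then have "\<forall>f \<in> hom C X Y. \<forall>g \<in> hom C Y W. \<forall>g' \<in> hom C Y W.
            cComp C (cPlus C g g') f = cPlus C (cComp C g f) (cComp C g' f)" using o by blast
  thus ?thesis using assms by blast
qed

lemma idem_zero: assumes "a \<in> hom C X Y" "a \<oplus> a = a" shows "a = z X Y"
proof -
  have o: "obj X" "obj Y" using assms(1) by (auto simp: hom_iff dest: dom_obj cod_obj)
  have "a = a \<oplus> ng a" 
  proof -
    have "a \<oplus> ng a = (a \<oplus> a) \<oplus> ng a" using assms by simp
    also have "\<dots> = a \<oplus> (a \<oplus> ng a)" using pa_ax(1) o assms pa_hom by metis
    also have "\<dots> = a" using pa_ax(3,4) o assms by metis
    finally show ?thesis by simp
  qed
  thus ?thesis using pa_ax(4) o assms by metis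
qed

lemma neg_unique: assumes "a \<in> hom C X Y" "b \<in> hom C X Y" "a \<oplus> b = z X Y" shows "b = ng a"
proof -
  have o: "obj X" "obj Y" using assms(1) by (auto simp: hom_iff dest: dom_obj cod_obj)
  have na: "ng a \<in> hom C X Y" using pa_hom o assms by metis
  have zz: "z X Y \<in> hom C X Y" using pa_hom o by metis
  have "b = b \<oplus> (a \<oplus> ng a)" using pa_ax(3,4) o assms by metis
  also have "\<dots> = (b \<oplus> a) \<oplus> ng a" using pa_ax(1) o assms na by metis
  also have "\<dots> = z X Y \<oplus> ng a" using pa_ax(2) o assms by metis
  also have "\<dots> = ng a" using pa_ax(2,3) o na zz by metis
  finally show ?thesis .
qed

lemma comp_zero: assumes "p \<in> hom C Y W" "obj X" shows "p \<cdot> z X Y = z X W"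
proof -
  have o: "obj Y" "obj W" using assms(1) by (auto simp: hom_iff dest: dom_obj cod_obj)
  have zz: "z X Y \<in> hom C X Y" using pa_hom o assms by metis
  have h: "p \<cdot> z X Y \<in> hom C X W" using assms zz by (auto simp: hom_iff)
  have "p \<cdot> z X Y = p \<cdot> (z X Y \<oplus> z X Y)" using pa_ax(3) zz o assms by metis
  also have "\<dots> = p \<cdot> z X Y \<oplus> p \<cdot> z X Y" using distr_l assms zz by metis
  finally show ?thesis using idem_zero h by simp
qed

lemma zero_comp: assumes "q \<in> hom C X Y" "obj W" shows "z Y W \<cdot> q = z X W"
proof -
  have o: "obj X" "obj Y" using assms(1) by (auto simp: hom_iff dest: dom_obj cod_obj)
  have zz: "z Y W \<in> hom C Y W" using pa_hom o assms by metis
  have h: "z Y W \<cdot> q \<in> hom C X W" using assms zz by (auto simp: hom_iff)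
  have "z Y W \<cdot> q = (z Y W \<oplus> z Y W) \<cdot> q" using pa_ax(3) zz o assms by metis
  also have "\<dots> = z Y W \<cdot> q \<oplus> z Y W \<cdot> q" using distr_r assms zz by metis
  finally show ?thesis using idem_zero h by simp
qed

lemma comp_neg: assumes "p \<in> hom C Y W" "x \<in> hom C X Y" shows "p \<cdot> ng x = ng (p \<cdot> x)"
proof -
  have o: "obj X" "obj Y" "obj W" using assms by (auto simp: hom_iff dest: dom_obj cod_obj)
  have n: "ng x \<in> hom C X Y" using pa_hom o assms by metis
  have "p \<cdot> x \<oplus> p \<cdot> ng x = p \<cdot> (x \<oplus> ng x)" using distr_l assms n by metis
  also have "\<dots> = z X W" using pa_ax(4) comp_zero assms o by metis
  finally have e: "p \<cdot> x \<oplus> p \<cdot> ng x = z X W" .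
  moreover have "p \<cdot> x \<in> hom C X W" "p \<cdot> ng x \<in> hom C X W" using assms n by (auto simp: hom_iff)
  ultimately show ?thesis using neg_unique by blast
qed

lemma neg_comp: assumes "q \<in> hom C X Y" "x \<in> hom C Y W" shows "ng x \<cdot> q = ng (x \<cdot> q)"
proof -
  have o: "obj X" "obj Y" "obj W" using assms by (auto simp: hom_iff dest: dom_obj cod_obj)
  have n: "ng x \<in> hom C Y W" using pa_hom o assms by metis
  have "x \<cdot> q \<oplus> ng x \<cdot> q = (x \<oplus> ng x) \<cdot> q" using distr_r assms n by metis
  also have "\<dots> = z X W" using pa_ax(4) zero_comp assms o by metis
  finally have e: "x \<cdot> q \<oplus> ng x \<cdot> q = z X W" .
  moreover have "x \<cdot> q \<in> hom C X W" "ng x \<cdot> q \<in> hom C X W" using assms n by (auto simp: hom_iff)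
  ultimately show ?thesis using neg_unique by blast
qed

end

context abs begin

lemma id_right'[simp]: "arr f \<Longrightarrow> dm f = X \<Longrightarrow> f \<cdot> idt X = f" by auto
lemma id_left'[simp]: "arr f \<Longrightarrow> cd f = X \<Longrightarrow> idt X \<cdot> f = f" by auto

definition "J1 X m = m \<cdot> ((idt X \<otimes> m) \<cdot> \<alpha> X X X)"
definition "J2 X m = m \<cdot> ((m \<otimes> idt X) \<cdot> (\<alpha>' X X X \<cdot> ((idt X \<otimes> \<beta> X X) \<cdot> \<alpha> X X X)))"
definition "J3 X m = m \<cdot> (m \<otimes> idt X)"

end

locale transp = abs +
  fixes p \<mu> m P A
  assumes o: "obj P" "obj A"
  and p: "arr p" "dm p = P" "cd p = A"
  and mu: "arr \<mu>" "dm \<mu> = P \<odot> P" "cd \<mu> = P"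
  and m: "arr m" "dm m = A \<odot> A" "cd m = A"
  and key: "p \<cdot> \<mu> = m \<cdot> (p \<otimes> p)"
begin

lemmas facts[simp] = o p mu m

abbreviation "q \<equiv> (p \<otimes> p) \<otimes> p"
abbreviation "r \<equiv> p \<otimes> (p \<otimes> p)"

lemma e1: "(p \<otimes> p) \<cdot> (idt P \<otimes> \<mu>) = (idt A \<otimes> m) \<cdot> r"
proof -
  have "(p \<otimes> p) \<cdot> (idt P \<otimes> \<mu>) = (p \<cdot> idt P) \<otimes> (p \<cdot> \<mu>)" using interchange[of "idt P" p \<mu> p] by simp
  also have "\<dots> = (idt A \<cdot> p) \<otimes> (m \<cdot> (p \<otimes> p))" by (simp add: key)
  also have "\<dots> = (idt A \<otimes> m) \<cdot> r" using interchange[of p "idt A" "p \<otimes> p" m] by simp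
  finally show ?thesis .
qed

lemma e2: "(p \<otimes> p) \<cdot> (\<mu> \<otimes> idt P) = (m \<otimes> idt A) \<cdot> q"
proof -
  have "(p \<otimes> p) \<cdot> (\<mu> \<otimes> idt P) = (p \<cdot> \<mu>) \<otimes> (p \<cdot> idt P)" using interchange[of \<mu> p "idt P" p] by simp
  also have "\<dots> = (m \<cdot> (p \<otimes> p)) \<otimes> (idt A \<cdot> p)" by (simp add: key)
  also have "\<dots> = (m \<otimes> idt A) \<cdot> q" using interchange[of "p \<otimes> p" m p "idt A"] by simp
  finally show ?thesis .
qed

lemma e3: "q \<cdot> \<alpha>' P P P = \<alpha>' A A A \<cdot> r" using ai_nat[of p p p] by simp
lemma e5: "r \<cdot> \<alpha> P P P = \<alpha> A A A \<cdot> q" using a_nat[of p p p] by simp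
lemma eb: "\<beta> A A \<cdot> (p \<otimes> p) = (p \<otimes> p) \<cdot> \<beta> P P" using b_nat[of p p] by simp

lemma e4: "r \<cdot> (idt P \<otimes> \<beta> P P) = (idt A \<otimes> \<beta> A A) \<cdot> r"
proof -
  have "r \<cdot> (idt P \<otimes> \<beta> P P) = (p \<cdot> idt P) \<otimes> ((p \<otimes> p) \<cdot> \<beta> P P)" using interchange[of "idt P" p "\<beta> P P" "p \<otimes> p"] by simp
  also have "\<dots> = (idt A \<cdot> p) \<otimes> (\<beta> A A \<cdot> (p \<otimes> p))" by (simp add: eb)
  also have "\<dots> = (idt A \<otimes> \<beta> A A) \<cdot> r" using interchange[of p "idt A" "p \<otimes> p" "\<beta> A A"] by simp
  finally show ?thesis .
qed

lemma T1: "p \<cdot> J1 P \<mu> = J1 A m \<cdot> q"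
proof -
  have "p \<cdot> J1 P \<mu> = m \<cdot> (((p \<otimes> p) \<cdot> (idt P \<otimes> \<mu>)) \<cdot> \<alpha> P P P)"
    unfolding J1_def by (simp add: assoc key)
  also have "\<dots> = m \<cdot> ((idt A \<otimes> m) \<cdot> (r \<cdot> \<alpha> P P P))" unfolding e1 by (simp add: assoc)
  also have "\<dots> = J1 A m \<cdot> q" unfolding e5 J1_def by (simp add: assoc)
  finally show ?thesis .
qed

lemma T2: "p \<cdot> J2 P \<mu> = J2 A m \<cdot> q"
proof -
  have "p \<cdot> J2 P \<mu> = m \<cdot> (((p \<otimes> p) \<cdot> (\<mu> \<otimes> idt P)) \<cdot> (\<alpha>' P P P \<cdot> ((idt P \<otimes> \<beta> P P) \<cdot> \<alpha> P P P)))"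
    unfolding J2_def by (simp add: assoc key)
  also have "\<dots> = m \<cdot> ((m \<otimes> idt A) \<cdot> ((q \<cdot> \<alpha>' P P P) \<cdot> ((idt P \<otimes> \<beta> P P) \<cdot> \<alpha> P P P)))"
    unfolding e2 by (simp add: assoc)
  also have "\<dots> = m \<cdot> ((m \<otimes> idt A) \<cdot> (\<alpha>' A A A \<cdot> ((r \<cdot> (idt P \<otimes> \<beta> P P)) \<cdot> \<alpha> P P P)))"
    unfolding e3 by (simp add: assoc)
  also have "\<dots> = m \<cdot> ((m \<otimes> idt A) \<cdot> (\<alpha>' A A A \<cdot> ((idt A \<otimes> \<beta> A A) \<cdot> (r \<cdot> \<alpha> P P P))))"
    unfolding e4 by (simp add: assoc)
  also have "\<dots> = J2 A m \<cdot> q" unfolding e5 J2_def by (simp add: assoc)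
  finally show ?thesis .
qed

lemma T3: "p \<cdot> J3 P \<mu> = J3 A m \<cdot> q"
proof -
  have "p \<cdot> J3 P \<mu> = m \<cdot> ((p \<otimes> p) \<cdot> (\<mu> \<otimes> idt P))" unfolding J3_def by (simp add: assoc key)
  also have "\<dots> = J3 A m \<cdot> q" unfolding e2 J3_def by (simp add: assoc)
  finally show ?thesis .
qed

lemma TB: "p \<cdot> (\<mu> \<cdot> \<beta> P P) = (m \<cdot> \<beta> A A) \<cdot> (p \<otimes> p)"
proof -
  have "p \<cdot> (\<mu> \<cdot> \<beta> P P) = m \<cdot> ((p \<otimes> p) \<cdot> \<beta> P P)" by (simp add: assoc key)
  also have "\<dots> = (m \<cdot> \<beta> A A) \<cdot> (p \<otimes> p)" unfolding eb[symmetric] by (simp add: assoc)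
  finally show ?thesis .
qed

end

context transp begin

lemma side1: assumes "m \<cdot> \<beta> A A \<oplus> m = z (A \<odot> A) A"
  shows "p \<cdot> (\<mu> \<cdot> \<beta> P P \<oplus> \<mu>) = p \<cdot> z (P \<odot> P) P"
proof -
  have h1: "\<mu> \<cdot> \<beta> P P \<in> hom C (P \<odot> P) P" "\<mu> \<in> hom C (P \<odot> P) P" "p \<in> hom C P A"
    "m \<cdot> \<beta> A A \<in> hom C (A \<odot> A) A" "m \<in> hom C (A \<odot> A) A" "p \<otimes> p \<in> hom C (P \<odot> P) (A \<odot> A)"
    by (simp_all add: hom_iff)
  have "p \<cdot> (\<mu> \<cdot> \<beta> P P \<oplus> \<mu>) = p \<cdot> (\<mu> \<cdot> \<beta> P P) \<oplus> p \<cdot> \<mu>" using distr_l h1 by blast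
  also have "\<dots> = (m \<cdot> \<beta> A A) \<cdot> (p \<otimes> p) \<oplus> m \<cdot> (p \<otimes> p)" by (simp add: TB key)
  also have "\<dots> = (m \<cdot> \<beta> A A \<oplus> m) \<cdot> (p \<otimes> p)" using distr_r h1 by metis
  also have "\<dots> = z (P \<odot> P) A" using assms zero_comp h1 by simp
  also have "\<dots> = p \<cdot> z (P \<odot> P) P" using comp_zero h1 by simp
  finally show ?thesis .
qed

lemma J_hom: "obj X \<Longrightarrow> n \<in> hom C (X \<odot> X) X \<Longrightarrow> J1 X n \<in> hom C ((X \<odot> X) \<odot> X) X"
  "obj X \<Longrightarrow> n \<in> hom C (X \<odot> X) X \<Longrightarrow> J2 X n \<in> hom C ((X \<odot> X) \<odot> X) X"
  "obj X \<Longrightarrow> n \<in> hom C (X \<odot> X) X \<Longrightarrow> J3 X n \<in> hom C ((X \<odot> X) \<odot> X) X"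
  unfolding J1_def J2_def J3_def by (auto simp: hom_iff)

lemma side2: assumes "(J1 A m \<oplus> J2 A m) \<oplus> ng (J3 A m) = z ((A \<odot> A) \<odot> A) A"
  shows "p \<cdot> ((J1 P \<mu> \<oplus> J2 P \<mu>) \<oplus> ng (J3 P \<mu>)) = p \<cdot> z ((P \<odot> P) \<odot> P) P"
proof -
  let ?X = "(P \<odot> P) \<odot> P" and ?Y = "(A \<odot> A) \<odot> A"
  have hm: "\<mu> \<in> hom C (P \<odot> P) P" "m \<in> hom C (A \<odot> A) A" and hp: "p \<in> hom C P A"
    and hq: "q \<in> hom C ?X ?Y" by (simp_all add: hom_iff)
  have oX: "obj ?X" "obj ?Y" "obj P" "obj A" by simp_all
  have JP: "J1 P \<mu> \<in> hom C ?X P" "J2 P \<mu> \<in> hom C ?X P" "J3 P \<mu> \<in> hom C ?X P"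
    using J_hom hm oX by blast+
  have JA: "J1 A m \<in> hom C ?Y A" "J2 A m \<in> hom C ?Y A" "J3 A m \<in> hom C ?Y A"
    using J_hom hm oX by blast+
  have s1: "J1 P \<mu> \<oplus> J2 P \<mu> \<in> hom C ?X P" "ng (J3 P \<mu>) \<in> hom C ?X P"
    using pa_hom JP oX by blast+
  have s2: "J1 A m \<oplus> J2 A m \<in> hom C ?Y A" "ng (J3 A m) \<in> hom C ?Y A"
    using pa_hom JA oX by blast+
  have "p \<cdot> ((J1 P \<mu> \<oplus> J2 P \<mu>) \<oplus> ng (J3 P \<mu>)) = (p \<cdot> J1 P \<mu> \<oplus> p \<cdot> J2 P \<mu>) \<oplus> ng (p \<cdot> J3 P \<mu>)"
    using distr_l[OF hp s1] distr_l[OF hp JP(1,2)] comp_neg[OF hp JP(3)] by simp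
  also have "\<dots> = (J1 A m \<cdot> q \<oplus> J2 A m \<cdot> q) \<oplus> ng (J3 A m \<cdot> q)" by (simp add: T1 T2 T3)
  also have "\<dots> = ((J1 A m \<oplus> J2 A m) \<oplus> ng (J3 A m)) \<cdot> q"
    using distr_r[OF hq s2] distr_r[OF hq JA(1,2)] neg_comp[OF hq JA(3)] by simp
  also have "\<dots> = z ?X A" using assms zero_comp hq oX by simp
  also have "\<dots> = p \<cdot> z ?X P" using comp_zero hp oX by simp
  finally show ?thesis .
qed

end

context abs begin

lemma lie_obj_iff: "lie_obj C X n \<longleftrightarrow> obj X \<and> n \<in> hom C (X \<odot> X) X \<and>
   n \<cdot> \<beta> X X \<oplus> n = z (X \<odot> X) X \<and> (J1 X n \<oplus> J2 X n) \<oplus> ng (J3 X n) = z ((X \<odot> X) \<odot> X) X"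
  unfolding lie_obj_def J1_def J2_def J3_def by auto

lemma lie_sub:
  assumes lA: "lie_obj C A mA" and lB: "lie_obj C B mB" and oP: "obj P"
   and hmu: "\<mu> \<in> hom C (P \<odot> P) P" and hA: "pA \<in> hom C P A" and hB: "pB \<in> hom C P B"
   and kA: "pA \<cdot> \<mu> = mA \<cdot> (pA \<otimes> pA)" and kB: "pB \<cdot> \<mu> = mB \<cdot> (pB \<otimes> pB)"
   and jm: "\<And>Q x y. x \<in> hom C Q P \<Longrightarrow> y \<in> hom C Q P \<Longrightarrow> pA \<cdot> x = pA \<cdot> y \<Longrightarrow> pB \<cdot> x = pB \<cdot> y \<Longrightarrow> x = y"
  shows "lie_obj C P \<mu>"
proof -
  interpret tA: transp C pA \<mu> mA P A
    using lA hmu hA kA oP ab by unfold_locales (auto simp: hom_iff lie_obj_iff)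
  interpret tB: transp C pB \<mu> mB P B
    using lB hmu hB kB oP ab by unfold_locales (auto simp: hom_iff lie_obj_iff)
  have JP: "J1 P \<mu> \<in> hom C ((P \<odot> P) \<odot> P) P" "J2 P \<mu> \<in> hom C ((P \<odot> P) \<odot> P) P" "J3 P \<mu> \<in> hom C ((P \<odot> P) \<odot> P) P"
    using tA.J_hom hmu oP by blast+
  have e1: "\<mu> \<cdot> \<beta> P P \<oplus> \<mu> = z (P \<odot> P) P"
  proof (rule jm)
    show "\<mu> \<cdot> \<beta> P P \<oplus> \<mu> \<in> hom C (P \<odot> P) P" using pa_hom hmu oP by (simp add: hom_iff)
    show "z (P \<odot> P) P \<in> hom C (P \<odot> P) P" using pa_hom oP by simp
    show "pA \<cdot> (\<mu> \<cdot> \<beta> P P \<oplus> \<mu>) = pA \<cdot> z (P \<odot> P) P" using tA.side1 lA lie_obj_iff by metis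
    show "pB \<cdot> (\<mu> \<cdot> \<beta> P P \<oplus> \<mu>) = pB \<cdot> z (P \<odot> P) P" using tB.side1 lB lie_obj_iff by metis
  qed
  have e2: "(J1 P \<mu> \<oplus> J2 P \<mu>) \<oplus> ng (J3 P \<mu>) = z ((P \<odot> P) \<odot> P) P"
  proof (rule jm)
    show "(J1 P \<mu> \<oplus> J2 P \<mu>) \<oplus> ng (J3 P \<mu>) \<in> hom C ((P \<odot> P) \<odot> P) P" using pa_hom JP oP by simp
    show "z ((P \<odot> P) \<odot> P) P \<in> hom C ((P \<odot> P) \<odot> P) P" using pa_hom oP by simp
    show "pA \<cdot> ((J1 P \<mu> \<oplus> J2 P \<mu>) \<oplus> ng (J3 P \<mu>)) = pA \<cdot> z ((P \<odot> P) \<odot> P) P" using tA.side2 lA lie_obj_iff by metis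
    show "pB \<cdot> ((J1 P \<mu> \<oplus> J2 P \<mu>) \<oplus> ng (J3 P \<mu>)) = pB \<cdot> z ((P \<odot> P) \<odot> P) P" using tB.side2 lB lie_obj_iff by metis
  qed
  show ?thesis unfolding lie_obj_iff using oP hmu e1 e2 by simp
qed

end

context abs begin

lemma jm:
  assumes pb: "is_pullback C f g P pA pB"
    and x: "x \<in> hom C Q P" and y: "y \<in> hom C Q P" and eA: "pA \<cdot> x = pA \<cdot> y" and eB: "pB \<cdot> x = pB \<cdot> y"
  shows "x = y"
proof -
  have f: "arr f" "arr g" "cd f = cd g" and pA: "pA \<in> hom C P (dm f)" and pB: "pB \<in> hom C P (dm g)"
    and c: "f \<cdot> pA = g \<cdot> pB"
    and U: "\<forall>Q \<in> cObj C. \<forall>h k. h \<in> hom C Q (dm f) \<longrightarrow> k \<in> hom C Q (dm g) \<longrightarrow>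
          f \<cdot> h = g \<cdot> k \<longrightarrow> (\<exists>!u. u \<in> hom C Q P \<and> pA \<cdot> u = h \<and> pB \<cdot> u = k)"
    using pb unfolding is_pullback_def by auto
  have oQ: "obj Q" using x by (auto simp: hom_iff)
  have h: "pA \<cdot> x \<in> hom C Q (dm f)" "pB \<cdot> x \<in> hom C Q (dm g)" using x pA pB by (auto simp: hom_iff)
  have "f \<cdot> (pA \<cdot> x) = (f \<cdot> pA) \<cdot> x" using x pA f by (auto simp: hom_iff intro: assoc)
  also have "\<dots> = (g \<cdot> pB) \<cdot> x" using c by simp
  also have "\<dots> = g \<cdot> (pB \<cdot> x)" using x pB f by (auto simp: hom_iff intro: assoc[symmetric])
  finally have "f \<cdot> (pA \<cdot> x) = g \<cdot> (pB \<cdot> x)" .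
  then have "\<exists>!u. u \<in> hom C Q P \<and> pA \<cdot> u = pA \<cdot> x \<and> pB \<cdot> u = pB \<cdot> x" using U oQ h by blast
  thus ?thesis using x y eA eB by metis
qed

lemma main_gen:
  assumes lA: "lie_obj C A mA" and lB: "lie_obj C B mB" and lC: "lie_obj C Cc mC"
    and mf: "lie_mor C (A, mA) (Cc, mC) f" and mg: "lie_mor C (B, mB) (Cc, mC) g"
    and pb: "is_pullback C f g P pA pB"
  shows "(\<exists>!\<mu>. \<mu> \<in> hom C (P \<odot> P) P \<and> pA \<cdot> \<mu> = mA \<cdot> (pA \<otimes> pA) \<and> pB \<cdot> \<mu> = mB \<cdot> (pB \<otimes> pB))"
    and "\<forall>\<mu>. \<mu> \<in> hom C (P \<odot> P) P \<and> pA \<cdot> \<mu> = mA \<cdot> (pA \<otimes> pA) \<and> pB \<cdot> \<mu> = mB \<cdot> (pB \<otimes> pB) \<longrightarrow>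
            is_pullback (Lie_cat C) ((A, mA), f, (Cc, mC)) ((B, mB), g, (Cc, mC))
              (P, \<mu>) ((P, \<mu>), pA, (A, mA)) ((P, \<mu>), pB, (B, mB))"
proof -
  have fh: "f \<in> hom C A Cc" and fk: "f \<cdot> mA = mC \<cdot> (f \<otimes> f)" using mf by (auto simp: lie_mor_def)
  have gh: "g \<in> hom C B Cc" and gk: "g \<cdot> mB = mC \<cdot> (g \<otimes> g)" using mg by (auto simp: lie_mor_def)
  have oP: "obj P" and pA: "pA \<in> hom C P A" and pB: "pB \<in> hom C P B" and c: "f \<cdot> pA = g \<cdot> pB"
    and U: "\<forall>Q \<in> cObj C. \<forall>h k. h \<in> hom C Q A \<longrightarrow> k \<in> hom C Q B \<longrightarrow>
          f \<cdot> h = g \<cdot> k \<longrightarrow> (\<exists>!u. u \<in> hom C Q P \<and> pA \<cdot> u = h \<and> pB \<cdot> u = k)"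
    using pb fh gh unfolding is_pullback_def by (auto simp: hom_iff)
  have hA: "mA \<in> hom C (A \<odot> A) A" and hB: "mB \<in> hom C (B \<odot> B) B" and hC: "mC \<in> hom C (Cc \<odot> Cc) Cc"
    using lA lB lC by (auto simp: lie_obj_def)
  have oA: "obj A" "obj B" "obj Cc" using lA lB lC by (auto simp: lie_obj_def)
  have JM: "\<And>Q x y. x \<in> hom C Q P \<Longrightarrow> y \<in> hom C Q P \<Longrightarrow> pA \<cdot> x = pA \<cdot> y \<Longrightarrow> pB \<cdot> x = pB \<cdot> y \<Longrightarrow> x = y"
    using jm[OF pb] by blast
  have push: "\<And>p X Y m n h. p \<in> hom C X Y \<Longrightarrow> m \<in> hom C (X \<odot> X) X \<Longrightarrow> n \<in> hom C (Y \<odot> Y) Y \<Longrightarrow> arr h \<Longrightarrow> cd h = dm (p \<otimes> p) \<Longrightarrow>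
       p \<cdot> m = n \<cdot> (p \<otimes> p) \<Longrightarrow> (p \<cdot> m) \<cdot> h = n \<cdot> (p \<otimes> p) \<cdot> h"
    by (auto simp: hom_iff assoc)
  have ex: "\<exists>!\<mu>. \<mu> \<in> hom C (P \<odot> P) P \<and> pA \<cdot> \<mu> = mA \<cdot> (pA \<otimes> pA) \<and> pB \<cdot> \<mu> = mB \<cdot> (pB \<otimes> pB)"
  proof -
    have h1: "mA \<cdot> (pA \<otimes> pA) \<in> hom C (P \<odot> P) A" "mB \<cdot> (pB \<otimes> pB) \<in> hom C (P \<odot> P) B"
      using pA pB hA hB by (auto simp: hom_iff)
    have "f \<cdot> (mA \<cdot> (pA \<otimes> pA)) = (f \<cdot> mA) \<cdot> (pA \<otimes> pA)" using fh hA pA by (auto simp: hom_iff assoc)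
    also have "\<dots> = mC \<cdot> ((f \<otimes> f) \<cdot> (pA \<otimes> pA))" using fh hC pA by (auto simp: hom_iff assoc fk)
    also have "\<dots> = mC \<cdot> ((f \<cdot> pA) \<otimes> (f \<cdot> pA))" using fh pA by (auto simp: hom_iff interchange)
    also have "\<dots> = mC \<cdot> ((g \<cdot> pB) \<otimes> (g \<cdot> pB))" using c by simp
    also have "\<dots> = mC \<cdot> ((g \<otimes> g) \<cdot> (pB \<otimes> pB))" using gh pB by (auto simp: hom_iff interchange)
    also have "\<dots> = (g \<cdot> mB) \<cdot> (pB \<otimes> pB)" using gh hC pB by (auto simp: hom_iff assoc gk)
    also have "\<dots> = g \<cdot> (mB \<cdot> (pB \<otimes> pB))" using gh hB pB by (auto simp: hom_iff assoc)
    finally have "f \<cdot> (mA \<cdot> (pA \<otimes> pA)) = g \<cdot> (mB \<cdot> (pB \<otimes> pB))" .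
    moreover have "obj (P \<odot> P)" using oP by simp
    ultimately show ?thesis using U h1 by blast
  qed
  show "\<exists>!\<mu>. \<mu> \<in> hom C (P \<odot> P) P \<and> pA \<cdot> \<mu> = mA \<cdot> (pA \<otimes> pA) \<and> pB \<cdot> \<mu> = mB \<cdot> (pB \<otimes> pB)" by (rule ex)
  show "\<forall>\<mu>. \<mu> \<in> hom C (P \<odot> P) P \<and> pA \<cdot> \<mu> = mA \<cdot> (pA \<otimes> pA) \<and> pB \<cdot> \<mu> = mB \<cdot> (pB \<otimes> pB) \<longrightarrow>
            is_pullback (Lie_cat C) ((A, mA), f, (Cc, mC)) ((B, mB), g, (Cc, mC))
              (P, \<mu>) ((P, \<mu>), pA, (A, mA)) ((P, \<mu>), pB, (B, mB))"
  proof (intro allI impI, elim conjE)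
    fix \<mu> assume hmu: "\<mu> \<in> hom C (P \<odot> P) P" and kA: "pA \<cdot> \<mu> = mA \<cdot> (pA \<otimes> pA)" and kB: "pB \<cdot> \<mu> = mB \<cdot> (pB \<otimes> pB)"
    have lP: "lie_obj C P \<mu>" by (rule lie_sub[OF lA lB oP hmu pA pB kA kB], rule JM)
    have univ: "\<exists>!u. u \<in> hom (Lie_cat C) Q (P, \<mu>) \<and>
                cComp (Lie_cat C) ((P, \<mu>), pA, (A, mA)) u = h \<and> cComp (Lie_cat C) ((P, \<mu>), pB, (B, mB)) u = k"
      if Q: "Q \<in> cObj (Lie_cat C)" and h: "h \<in> hom (Lie_cat C) Q (A, mA)" and k: "k \<in> hom (Lie_cat C) Q (B, mB)"
        and e: "cComp (Lie_cat C) ((A, mA), f, (Cc, mC)) h = cComp (Lie_cat C) ((B, mB), g, (Cc, mC)) k" for Q h k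
    proof -
      obtain Q0 mQ where Qd: "Q = (Q0, mQ)" by (cases Q)
      have lQ: "lie_obj C Q0 mQ" using Q Qd by (simp add: Lie_cat_def)
      obtain h0 where hd: "h = (Q, h0, (A, mA))" and mh: "lie_mor C Q (A, mA) h0"
        using h by (auto simp: hom_def Lie_cat_def)
      obtain k0 where kd: "k = (Q, k0, (B, mB))" and mk: "lie_mor C Q (B, mB) k0"
        using k by (auto simp: hom_def Lie_cat_def)
      have h0: "h0 \<in> hom C Q0 A" "h0 \<cdot> mQ = mA \<cdot> (h0 \<otimes> h0)" using mh Qd by (auto simp: lie_mor_def)
      have k0: "k0 \<in> hom C Q0 B" "k0 \<cdot> mQ = mB \<cdot> (k0 \<otimes> k0)" using mk Qd by (auto simp: lie_mor_def)
      have fk0: "f \<cdot> h0 = g \<cdot> k0" using e hd kd by (simp add: Lie_cat_def)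
      have oQ: "obj Q0" using lQ by (simp add: lie_obj_def)
      obtain u0 where u0: "u0 \<in> hom C Q0 P" "pA \<cdot> u0 = h0" "pB \<cdot> u0 = k0"
        using U oQ h0 k0 fk0 by blast
      have hQ: "mQ \<in> hom C (Q0 \<odot> Q0) Q0" using lQ by (simp add: lie_obj_def)
      have lm: "u0 \<cdot> mQ = \<mu> \<cdot> (u0 \<otimes> u0)"
      proof (rule JM)
        show "u0 \<cdot> mQ \<in> hom C (Q0 \<odot> Q0) P" using u0 hQ by (auto simp: hom_iff)
        show "\<mu> \<cdot> (u0 \<otimes> u0) \<in> hom C (Q0 \<odot> Q0) P" using u0 hmu by (auto simp: hom_iff)
        have "pA \<cdot> (u0 \<cdot> mQ) = mA \<cdot> (h0 \<otimes> h0)" using u0 hQ pA h0 by (auto simp: hom_iff assoc)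
        also have "\<dots> = mA \<cdot> ((pA \<otimes> pA) \<cdot> (u0 \<otimes> u0))" using u0 pA by (auto simp: hom_iff interchange)
        also have "\<dots> = pA \<cdot> (\<mu> \<cdot> (u0 \<otimes> u0))" using u0 pA hA hmu kA by (auto simp: hom_iff assoc)
        finally show "pA \<cdot> (u0 \<cdot> mQ) = pA \<cdot> (\<mu> \<cdot> (u0 \<otimes> u0))" .
        have "pB \<cdot> (u0 \<cdot> mQ) = mB \<cdot> (k0 \<otimes> k0)" using u0 hQ pB k0 by (auto simp: hom_iff assoc)
        also have "\<dots> = mB \<cdot> ((pB \<otimes> pB) \<cdot> (u0 \<otimes> u0))" using u0 pB by (auto simp: hom_iff interchange)
        also have "\<dots> = pB \<cdot> (\<mu> \<cdot> (u0 \<otimes> u0))" using u0 pB hB hmu kB by (auto simp: hom_iff assoc)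
        finally show "pB \<cdot> (u0 \<cdot> mQ) = pB \<cdot> (\<mu> \<cdot> (u0 \<otimes> u0))" .
      qed
      show ?thesis
      proof (rule ex1I[of _ "(Q, u0, (P, \<mu>))"])
        show "(Q, u0, (P, \<mu>)) \<in> hom (Lie_cat C) Q (P, \<mu>) \<and>
          cComp (Lie_cat C) ((P, \<mu>), pA, (A, mA)) (Q, u0, (P, \<mu>)) = h \<and>
          cComp (Lie_cat C) ((P, \<mu>), pB, (B, mB)) (Q, u0, (P, \<mu>)) = k"
          using lQ lP u0 lm Qd hd kd by (simp add: hom_def Lie_cat_def lie_mor_def)
        fix v assume v: "v \<in> hom (Lie_cat C) Q (P, \<mu>) \<and>
          cComp (Lie_cat C) ((P, \<mu>), pA, (A, mA)) v = h \<and> cComp (Lie_cat C) ((P, \<mu>), pB, (B, mB)) v = k"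
        then obtain v0 where vd: "v = (Q, v0, (P, \<mu>))" and mv: "lie_mor C Q (P, \<mu>) v0"
          by (auto simp: hom_def Lie_cat_def)
        have v0: "v0 \<in> hom C Q0 P" using mv Qd by (simp add: lie_mor_def)
        have "pA \<cdot> v0 = h0" "pB \<cdot> v0 = k0" using v vd hd kd by (auto simp: Lie_cat_def)
        hence "v0 = u0" using JM[OF v0 u0(1)] u0 by simp
        thus "v = (Q, u0, (P, \<mu>))" using vd by simp
      qed
    qed
    show "is_pullback (Lie_cat C) ((A, mA), f, (Cc, mC)) ((B, mB), g, (Cc, mC))
              (P, \<mu>) ((P, \<mu>), pA, (A, mA)) ((P, \<mu>), pB, (B, mB))"
      unfolding is_pullback_def
    proof (intro conjI)
      show "((A, mA), f, (Cc, mC)) \<in> cArr (Lie_cat C)" using lA lC mf by (simp add: Lie_cat_def)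
      show "((B, mB), g, (Cc, mC)) \<in> cArr (Lie_cat C)" using lB lC mg by (simp add: Lie_cat_def)
      show "cCod (Lie_cat C) ((A, mA), f, Cc, mC) = cCod (Lie_cat C) ((B, mB), g, Cc, mC)" by (simp add: Lie_cat_def)
      show "(P, \<mu>) \<in> cObj (Lie_cat C)" using lP by (simp add: Lie_cat_def)
      show "((P, \<mu>), pA, A, mA) \<in> hom (Lie_cat C) (P, \<mu>) (cDom (Lie_cat C) ((A, mA), f, Cc, mC))"
        using lP lA pA kA by (simp add: Lie_cat_def hom_def lie_mor_def)
      show "((P, \<mu>), pB, B, mB) \<in> hom (Lie_cat C) (P, \<mu>) (cDom (Lie_cat C) ((B, mB), g, Cc, mC))"
        using lP lB pB kB by (simp add: Lie_cat_def hom_def lie_mor_def)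
      show "cComp (Lie_cat C) ((A, mA), f, Cc, mC) ((P, \<mu>), pA, A, mA) =
            cComp (Lie_cat C) ((B, mB), g, Cc, mC) ((P, \<mu>), pB, B, mB)" using c by (simp add: Lie_cat_def)
      show "\<forall>Q\<in>cObj (Lie_cat C). \<forall>h k. h \<in> hom (Lie_cat C) Q (cDom (Lie_cat C) ((A, mA), f, Cc, mC)) \<longrightarrow>
          k \<in> hom (Lie_cat C) Q (cDom (Lie_cat C) ((B, mB), g, Cc, mC)) \<longrightarrow>
          cComp (Lie_cat C) ((A, mA), f, Cc, mC) h = cComp (Lie_cat C) ((B, mB), g, Cc, mC) k \<longrightarrow>
          (\<exists>!u. u \<in> hom (Lie_cat C) Q (P, \<mu>) \<and>
                cComp (Lie_cat C) ((P, \<mu>), pA, A, mA) u = h \<and> cComp (Lie_cat C) ((P, \<mu>), pB, B, mB) u = k)"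
        using univ by (simp add: Lie_cat_def)
    qed
  qed
qed

end

theorem mainTheorem7:
  fixes \<C> :: "('o,'m,'x) bscat_scheme"
    and A B C :: 'o and \<mu>A \<mu>B \<mu>C f g :: 'm
    and P :: 'o and \<pi>A \<pi>B :: 'm
  assumes "additive_braided_semigroupal \<C>"
    and "has_pullbacks \<C>"
    and "lie_obj \<C> A \<mu>A" and "lie_obj \<C> B \<mu>B" and "lie_obj \<C> C \<mu>C"
    and "lie_mor \<C> (A, \<mu>A) (C, \<mu>C) f" and "lie_mor \<C> (B, \<mu>B) (C, \<mu>C) g"
    and "is_pullback \<C> f g P \<pi>A \<pi>B"
  shows "(\<exists>!\<mu>. \<mu> \<in> hom \<C> (cTens \<C> P P) P \<and>
            cComp \<C> \<pi>A \<mu> = cComp \<C> \<mu>A (cTensM \<C> \<pi>A \<pi>A) \<and>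
            cComp \<C> \<pi>B \<mu> = cComp \<C> \<mu>B (cTensM \<C> \<pi>B \<pi>B))
       \<and> (\<forall>\<mu>. \<mu> \<in> hom \<C> (cTens \<C> P P) P \<and>
            cComp \<C> \<pi>A \<mu> = cComp \<C> \<mu>A (cTensM \<C> \<pi>A \<pi>A) \<and>
            cComp \<C> \<pi>B \<mu> = cComp \<C> \<mu>B (cTensM \<C> \<pi>B \<pi>B) \<longrightarrow>
            is_pullback (Lie_cat \<C>) ((A, \<mu>A), f, (C, \<mu>C)) ((B, \<mu>B), g, (C, \<mu>C))
              (P, \<mu>) ((P, \<mu>), \<pi>A, (A, \<mu>A)) ((P, \<mu>), \<pi>B, (B, \<mu>B)))
       \<and> has_pullbacks (Lie_cat \<C>)"
proof -
  interpret abs \<C> using assms(1) by unfold_locales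
  note M = main_gen[OF assms(3-8)]
  have hp: "has_pullbacks (Lie_cat \<C>)"
    unfolding has_pullbacks_def
  proof (intro ballI impI)
    fix F G assume F: "F \<in> cArr (Lie_cat \<C>)" and G: "G \<in> cArr (Lie_cat \<C>)"
      and e: "cCod (Lie_cat \<C>) F = cCod (Lie_cat \<C>) G"
    obtain A1 m1 f0 C1 mc where Fd: "F = ((A1, m1), f0, (C1, mc))" by (metis prod.exhaust)
    obtain B1 m2 g0 C2 mc2 where Gd: "G = ((B1, m2), g0, (C2, mc2))" by (metis prod.exhaust)
    have eC: "C2 = C1" "mc2 = mc" using e Fd Gd by (auto simp: Lie_cat_def)
    have lF: "lie_obj \<C> A1 m1" "lie_obj \<C> C1 mc" "lie_mor \<C> (A1, m1) (C1, mc) f0"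
      using F Fd by (auto simp: Lie_cat_def)
    have lG: "lie_obj \<C> B1 m2" "lie_mor \<C> (B1, m2) (C1, mc) g0"
      using G Gd eC by (auto simp: Lie_cat_def)
    have ar: "f0 \<in> cArr \<C>" "g0 \<in> cArr \<C>" "cCod \<C> f0 = cCod \<C> g0"
      using lF(3) lG(2) by (auto simp: lie_mor_def hom_def)
    obtain P1 p1 p2 where pb: "is_pullback \<C> f0 g0 P1 p1 p2"
      using assms(2) ar unfolding has_pullbacks_def by blast
    note M1 = main_gen[OF lF(1) lG(1) lF(2) lF(3) lG(2) pb]
    obtain \<mu> where "\<mu> \<in> hom \<C> (cTens \<C> P1 P1) P1 \<and> cComp \<C> p1 \<mu> = cComp \<C> m1 (cTensM \<C> p1 p1) \<and>
         cComp \<C> p2 \<mu> = cComp \<C> m2 (cTensM \<C> p2 p2)" using M1(1) by blast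
    with M1(2) have "is_pullback (Lie_cat \<C>) F G (P1, \<mu>) ((P1, \<mu>), p1, (A1, m1)) ((P1, \<mu>), p2, (B1, m2))"
      using Fd Gd eC by blast
    thus "\<exists>P p q. is_pullback (Lie_cat \<C>) F G P p q" by blast
  qed
  show ?thesis using M hp by blast
qed

end
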